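(* Let $\mathfrak{R}$ be a complete rewriting system on $\Sigma$ and let $w\in\Sigma^*$. Assume that $\mathrm{Allseq}(w)$ terminates. If there are no cyclical overlaps and no cyclical inclusions in $\mathrm{Allseq}(w)$, then $\mathrm{Allseq}(w)$ converges.
   Context: $\Sigma^*$ is the free monoid on $\Sigma$; a rewriting system is a set of rules $l\to r$ with $l,r\in\Sigma^*$, complete meaning terminating and confluent; $plq\to prq$ is one rewriting step. $u\simeq v$ means $u=ab$, $v=ba$ for some words $a,b$ (cyclic conjugates). $u\rightsquigarrow v$ means some cyclic conjugate $\tilde u$ of $u$ (possibly $u$) satisfies $\tilde u\to v$; $\rightsquigarrow^*$ is its reflexive–transitive closure. A word is cyclically irreducible if it and all its cyclic conjugates are irreducible. $\mathrm{Allseq}(w)$ is the set of all sequences of cyclical reductions $u_1\rightsquigarrow u_2\rightsquigarrow\cdots$ with $u_1$ a cyclic conjugate of $w$; it terminates if none of them is infinite, and converges if, up to $\simeq$, a unique cyclically irreducible word is reached in it. There is a cyclical overlap between two rules of $\mathfrak{R}$ if they have the form $xuy\to u'$ and $yvx\to v'$ with $u',v'$ words, $u,v,x,y$ non-empty words, and $u'v$, $v'u$ not cyclic conjugates. There is a cyclical inclusion between rules $l\to v$ and $l'\to v'$ if either $l'\simeq l$ and $v,v'$ are not cyclic conjugates, or $l'$ is a proper subword of a cyclic conjugate $\ell_1$ of $l$, written $\ell_1=ul'$ with $u$ non-empty, and $v$ and $uv'$ are not cyclic conjugates. "No cyclical overlaps and no cyclical inclusions in $\mathrm{Allseq}(w)$"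 means that for no word $u$ occurring in a sequence of $\mathrm{Allseq}(w)$ are there rules $r_1,r_2$, each applicable to some cyclic conjugate of $u$, with a cyclical overlap or a cyclical inclusion between $r_1$ and $r_2$. *)

theory Defs
  imports Main
begin

type_synonym 'a rule = "'a list \<times> 'a list"

definition rstep :: "'a rule set \<Rightarrow> ('a list \<times> 'a list) set" where
  "rstep R = {(p @ l @ q, p @ r @ q) | p l r q. (l, r) \<in> R}"

definition terminating :: "'a rule set \<Rightarrow> bool" where
  "terminating R \<longleftrightarrow> wf ((rstep R)\<inverse>)"

definition confluent :: "'a rule set \<Rightarrow> bool" where
  "confluent R \<longleftrightarrow> (\<forall>a b c. (a, b) \<in> (rstep R)\<^sup>* \<and> (a, c) \<in> (rstep R)\<^sup>* \<longrightarrow>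
      (\<exists>d. (b, d) \<in> (rstep R)\<^sup>* \<and> (c, d) \<in> (rstep R)\<^sup>*))"

definition complete :: "'a rule set \<Rightarrow> bool" where
  "complete R \<longleftrightarrow> terminating R \<and> confluent R"

definition cyc_conj :: "'a list \<Rightarrow> 'a list \<Rightarrow> bool" where
  "cyc_conj u v \<longleftrightarrow> (\<exists>a b. u = a @ b \<and> v = b @ a)"

definition irreducible :: "'a rule set \<Rightarrow> 'a list \<Rightarrow> bool" where
  "irreducible R u \<longleftrightarrow> (\<nexists>v. (u, v) \<in> rstep R)"

definition cyc_irreducible :: "'a rule set \<Rightarrow> 'a list \<Rightarrow> bool" where
  "cyc_irreducible R u \<longleftrightarrow> (\<forall>u'. cyc_conj u u' \<longrightarrow> irreducible R u')"

definition cyc_red :: "'a rule set \<Rightarrow> 'a list \<Rightarrow> 'a list \<Rightarrow> bool" where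
  "cyc_red R u v \<longleftrightarrow> (\<exists>u'. cyc_conj u u' \<and> (u', v) \<in> rstep R)"

definition allseq_terminates :: "'a rule set \<Rightarrow> 'a list \<Rightarrow> bool" where
  "allseq_terminates R w \<longleftrightarrow>
     \<not> (\<exists>f :: nat \<Rightarrow> 'a list. cyc_conj w (f 0) \<and> (\<forall>n. cyc_red R (f n) (f (Suc n))))"

definition allseq_words :: "'a rule set \<Rightarrow> 'a list \<Rightarrow> 'a list set" where
  "allseq_words R w = {u. \<exists>u1. cyc_conj w u1 \<and> (cyc_red R)\<^sup>*\<^sup>* u1 u}"

definition allseq_converges :: "'a rule set \<Rightarrow> 'a list \<Rightarrow> bool" where
  "allseq_converges R w \<longleftrightarrow>
     (\<exists>z \<in> allseq_words R w. cyc_irreducible R z \<and>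
        (\<forall>z' \<in> allseq_words R w. cyc_irreducible R z' \<longrightarrow> cyc_conj z z'))"

definition applicable :: "'a rule \<Rightarrow> 'a list \<Rightarrow> bool" where
  "applicable \<rho> u \<longleftrightarrow> (\<exists>p q. u = p @ fst \<rho> @ q)"

definition cyc_overlap :: "'a rule \<Rightarrow> 'a rule \<Rightarrow> bool" where
  "cyc_overlap \<rho>1 \<rho>2 \<longleftrightarrow>
     (\<exists>x u y v. x \<noteq> [] \<and> u \<noteq> [] \<and> y \<noteq> [] \<and> v \<noteq> [] \<and>
        fst \<rho>1 = x @ u @ y \<and> fst \<rho>2 = y @ v @ x \<and>
        \<not> cyc_conj (snd \<rho>1 @ v) (snd \<rho>2 @ u))"

definition cyc_inclusion :: "'a rule \<Rightarrow> 'a rule \<Rightarrow> bool" where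
  "cyc_inclusion \<rho>1 \<rho>2 \<longleftrightarrow>
     (cyc_conj (fst \<rho>2) (fst \<rho>1) \<and> \<not> cyc_conj (snd \<rho>1) (snd \<rho>2)) \<or>
     (\<exists>l1 u. cyc_conj (fst \<rho>1) l1 \<and> u \<noteq> [] \<and> l1 = u @ fst \<rho>2 \<and>
        \<not> cyc_conj (snd \<rho>1) (u @ snd \<rho>2))"

definition no_cyc_overlap_inclusion :: "'a rule set \<Rightarrow> 'a list \<Rightarrow> bool" where
  "no_cyc_overlap_inclusion R w \<longleftrightarrow>
     (\<forall>u \<in> allseq_words R w. \<forall>\<rho>1 \<in> R. \<forall>\<rho>2 \<in> R.
        (\<exists>u1. cyc_conj u u1 \<and> applicable \<rho>1 u1) \<and>
        (\<exists>u2. cyc_conj u u2 \<and> applicable \<rho>2 u2) \<longrightarrow>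
        \<not> cyc_overlap \<rho>1 \<rho>2 \<and> \<not> cyc_inclusion \<rho>1 \<rho>2)"

end

theory Submission
  imports Defs
begin

lemma cc_refl: "cyc_conj u u"
  unfolding cyc_conj_def by (rule exI[of _ "[]"]) auto

lemma cc_sym: "cyc_conj u v \<Longrightarrow> cyc_conj v u"
  unfolding cyc_conj_def by blast

lemma cc_app: "cyc_conj (a @ b) (b @ a)"
  unfolding cyc_conj_def by blast

lemma cc_rot: "cyc_conj u v \<longleftrightarrow> (\<exists>n. v = rotate n u)"
proof
  assume "cyc_conj u v"
  then obtain a b where "u = a @ b" "v = b @ a" unfolding cyc_conj_def by blast
  then show "\<exists>n. v = rotate n u" by (metis rotate_append)
next
  assume "\<exists>n. v = rotate n u"
  then obtain n where "v = rotate n u" by blast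
  then show "cyc_conj u v" unfolding cyc_conj_def
    by (metis append_take_drop_id rotate_drop_take)
qed

lemma cc_trans: "cyc_conj u v \<Longrightarrow> cyc_conj v x \<Longrightarrow> cyc_conj u x"
  unfolding cc_rot by (metis rotate_rotate)

lemma cyc_red_conj: "cyc_conj u u' \<Longrightarrow> cyc_red R u' v \<Longrightarrow> cyc_red R u v"
  unfolding cyc_red_def by (meson cc_trans)

definition reach :: "'a rule set \<Rightarrow> 'a list \<Rightarrow> 'a list \<Rightarrow> bool" where
  "reach R u x \<longleftrightarrow> (\<exists>y. (cyc_red R)\<^sup>*\<^sup>* u y \<and> cyc_conj y x)"

definition join :: "'a rule set \<Rightarrow> 'a list \<Rightarrow> 'a list \<Rightarrow> bool" where
  "join R x y \<longleftrightarrow> (\<exists>d. reach R x d \<and> reach R y d)"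

lemma reach_conj: "cyc_conj u x \<Longrightarrow> reach R u x"
  unfolding reach_def by blast

lemma reach_refl: "reach R u u"
  by (rule reach_conj[OF cc_refl])

lemma reach_trans:
  assumes "reach R u x" "reach R x z" shows "reach R u z"
proof -
  obtain y where y: "(cyc_red R)\<^sup>*\<^sup>* u y" "cyc_conj y x" using assms(1) unfolding reach_def by blast
  obtain y' where y': "(cyc_red R)\<^sup>*\<^sup>* x y'" "cyc_conj y' z" using assms(2) unfolding reach_def by blast
  from y'(1) show ?thesis
  proof (cases rule: converse_rtranclpE)
    case base
    then show ?thesis using y y' cc_trans unfolding reach_def by blast
  next
    case (step x1)
    have "cyc_red R y x1" using cyc_red_conj[OF y(2) step(1)] .
    then have "(cyc_red R)\<^sup>*\<^sup>* u y'" using y(1) step(2)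
      by (meson rtranclp.rtrancl_into_rtrancl rtranclp_trans)
    then show ?thesis using y' unfolding reach_def by blast
  qed
qed

lemma join_conj: "cyc_conj x x' \<Longrightarrow> join R x y \<Longrightarrow> join R x' y"
  unfolding join_def by (meson cc_sym reach_conj reach_trans)

lemma join_sym: "join R x y \<Longrightarrow> join R y x"
  unfolding join_def by blast

lemma join_of_conj: "cyc_conj x y \<Longrightarrow> join R x y"
  unfolding join_def using reach_conj reach_refl by blast

lemma rstep_cyc: "(x, y) \<in> rstep R \<Longrightarrow> cyc_red R x y"
  unfolding cyc_red_def using cc_refl by blast

lemma rsteps_cyc: "(x, y) \<in> (rstep R)\<^sup>* \<Longrightarrow> (cyc_red R)\<^sup>*\<^sup>* x y"
  by (induction rule: rtrancl_induct) (auto intro: rtranclp.rtrancl_into_rtrancl rstep_cyc)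

lemma rstep_I: "(l, r) \<in> R \<Longrightarrow> (p @ l @ q, p @ r @ q) \<in> rstep R"
  unfolding rstep_def by blast

lemma lin_join:
  assumes "confluent R" "(l1, r1) \<in> R" "(l2, r2) \<in> R" "p1 @ l1 @ q1 = p2 @ l2 @ q2"
    "cyc_conj (p1 @ r1 @ q1) x" "cyc_conj (p2 @ r2 @ q2) y"
  shows "join R x y"
proof -
  have "(p1 @ l1 @ q1, p1 @ r1 @ q1) \<in> (rstep R)\<^sup>*" using rstep_I[OF assms(2)] by blast
  moreover have "(p1 @ l1 @ q1, p2 @ r2 @ q2) \<in> (rstep R)\<^sup>*" using rstep_I[OF assms(3)] assms(4) by auto
  ultimately obtain d where "(p1 @ r1 @ q1, d) \<in> (rstep R)\<^sup>*" "(p2 @ r2 @ q2, d) \<in> (rstep R)\<^sup>*"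
    using assms(1) unfolding confluent_def by blast
  then have "join R (p1 @ r1 @ q1) (p2 @ r2 @ q2)"
    unfolding join_def reach_def using rsteps_cyc cc_refl by blast
  then show ?thesis using join_conj join_sym assms(5,6) by metis
qed


lemma case_i:
  assumes conf: "confluent R" and R1: "(l1, r1) \<in> R" and R2: "(l2, r2) \<in> R"
    and e: "s1 = a' @ b" "b @ l1 @ a' = l2 @ s2"
  shows "join R (r1 @ s1) (r2 @ s2)"
proof -
  from e(2) obtain us where "(b = l2 @ us \<and> us @ l1 @ a' = s2) \<or> (b @ us = l2 \<and> l1 @ a' = us @ s2)"
    using append_eq_append_conv2[of b "l1 @ a'" l2 s2] by blast
  then show ?thesis
  proof
    assume h: "b = l2 @ us \<and> us @ l1 @ a' = s2"
    show ?thesis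
      apply (rule lin_join[OF conf R1 R2, of "[]" "a' @ l2 @ us" "l1 @ a'" us])
      using h e cc_refl apply auto[2]
      using h cc_app[of "l1 @ a'" "r2 @ us"] by auto
  next
    assume h: "b @ us = l2 \<and> l1 @ a' = us @ s2"
    show ?thesis
      apply (rule lin_join[OF conf R1 R2, of b a' "[]" s2])
      using h e apply simp
      using h e cc_app[of b "r1 @ a'"] apply simp
      using cc_refl by auto
  qed
qed

lemma case_ii:
  assumes conf: "confluent R" and R1: "(l1, r1) \<in> R" and R2: "(l2, r2) \<in> R"
    and H: "\<not> cyc_overlap (l1, r1) (l2, r2)" "\<not> cyc_inclusion (l1, r1) (l2, r2)"
           "\<not> cyc_inclusion (l2, r2) (l1, r1)"
    and e: "a @ c = l1" "c \<noteq> []" "c @ s1 @ a = l2 @ s2"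
  shows "join R (r1 @ s1) (r2 @ s2)"
proof -
  from e(3) obtain us where "(c @ s1 = l2 @ us \<and> us @ a = s2) \<or> (c @ s1 @ us = l2 \<and> a = us @ s2)"
    using append_eq_append_conv2[of "c @ s1" a l2 s2] by auto
  then show ?thesis
  proof
    assume h: "c @ s1 = l2 @ us \<and> us @ a = s2"
    show ?thesis
      apply (rule lin_join[OF conf R1 R2, of "[]" s1 a us])
      using h e apply (metis append.assoc append_Nil)
      apply (simp add: cc_refl)
      using h cc_app[of a "r2 @ us"] by auto
  next
    assume h: "c @ s1 @ us = l2 \<and> a = us @ s2"
    show ?thesis
    proof (cases "us = []")
      case True
      show ?thesis
        apply (rule lin_join[OF conf R1 R2, of "[]" s1 s2 "[]"])
        using h e True apply (metis append.assoc append_Nil append_Nil2)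
        apply (simp add: cc_refl)
        using cc_app[of s2 r2] by simp
    next
      case usne: False
      have l1: "l1 = us @ s2 @ c" and l2: "l2 = c @ s1 @ us" using h e by auto
      show ?thesis
      proof (cases "s1 = []")
        case s1: True
        show ?thesis
        proof (cases "s2 = []")
          case s2: True
          have "cyc_conj l2 l1" using l1 l2 s1 s2 cc_app[of c us] by simp
          then have "cyc_conj r1 r2" using H(2) unfolding cyc_inclusion_def by auto
          then show ?thesis using s1 s2 join_of_conj by simp
        next
          case s2: False
          have "cyc_conj l1 (s2 @ l2)" using l1 l2 s1 cc_app[of us "s2 @ c"] by simp
          then have "cyc_conj r1 (s2 @ r2)" using H(2) s2 unfolding cyc_inclusion_def by auto
          then have "cyc_conj r1 (r2 @ s2)" using cc_trans cc_app by blast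
          then show ?thesis using s1 join_of_conj by simp
        qed
      next
        case s1: False
        show ?thesis
        proof (cases "s2 = []")
          case s2: True
          have "cyc_conj l2 (s1 @ l1)" using l1 l2 s2 cc_app[of c "s1 @ us"] by simp
          then have "cyc_conj r2 (s1 @ r1)" using H(3) s1 unfolding cyc_inclusion_def by auto
          then have "cyc_conj r2 (r1 @ s1)" using cc_trans cc_app by blast
          then show ?thesis using s2 join_of_conj join_sym cc_sym by fastforce
        next
          case s2: False
          have "cyc_conj (r1 @ s1) (r2 @ s2)"
            using H(1) usne s1 s2 e(2) l1 l2 unfolding cyc_overlap_def
            by (metis fst_conv snd_conv)
          then show ?thesis using join_of_conj by blast
        qed
      qed
    qed
  qed
qed

lemma core:
  assumes conf: "confluent R" and R1: "(l1, r1) \<in> R" and R2: "(l2, r2) \<in> R"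
    and H: "\<not> cyc_overlap (l1, r1) (l2, r2)" "\<not> cyc_inclusion (l1, r1) (l2, r2)"
           "\<not> cyc_inclusion (l2, r2) (l1, r1)"
    and e: "a @ b = l1 @ s1" "b @ a = l2 @ s2"
  shows "join R (r1 @ s1) (r2 @ s2)"
proof -
  from e(1) obtain us where "(a = l1 @ us \<and> us @ b = s1) \<or> (a @ us = l1 \<and> b = us @ s1)"
    using append_eq_append_conv2[of a b l1 s1] by auto
  then show ?thesis
  proof
    assume h: "a = l1 @ us \<and> us @ b = s1"
    show ?thesis by (rule case_i[OF conf R1 R2, of s1 us b]) (use h e in auto)
  next
    assume h: "a @ us = l1 \<and> b = us @ s1"
    show ?thesis
    proof (cases "us = []")
      case True
      show ?thesis by (rule case_i[OF conf R1 R2, of s1 "[]" b]) (use h e True in auto)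
    next
      case False
      show ?thesis by (rule case_ii[OF conf R1 R2 H, of a us]) (use h e False in auto)
    qed
  qed
qed


lemma local_conf:
  assumes conf: "confluent R"
    and H: "\<forall>\<rho>1 \<in> R. \<forall>\<rho>2 \<in> R.
        (\<exists>u1. cyc_conj u u1 \<and> applicable \<rho>1 u1) \<and>
        (\<exists>u2. cyc_conj u u2 \<and> applicable \<rho>2 u2) \<longrightarrow>
        \<not> cyc_overlap \<rho>1 \<rho>2 \<and> \<not> cyc_inclusion \<rho>1 \<rho>2"
    and s1: "cyc_red R u v1" and s2: "cyc_red R u v2"
  shows "join R v1 v2"
proof -
  obtain p1 l1 r1 q1 where A: "cyc_conj u (p1 @ l1 @ q1)" "v1 = p1 @ r1 @ q1" "(l1, r1) \<in> R"
    using s1 unfolding cyc_red_def rstep_def by blast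
  obtain p2 l2 r2 q2 where B: "cyc_conj u (p2 @ l2 @ q2)" "v2 = p2 @ r2 @ q2" "(l2, r2) \<in> R"
    using s2 unfolding cyc_red_def rstep_def by blast
  have ap1: "applicable (l1, r1) (p1 @ l1 @ q1)" unfolding applicable_def by auto
  have ap2: "applicable (l2, r2) (p2 @ l2 @ q2)" unfolding applicable_def by auto
  have H1: "\<not> cyc_overlap (l1, r1) (l2, r2)" "\<not> cyc_inclusion (l1, r1) (l2, r2)"
    using H A(1,3) B(1,3) ap1 ap2 by blast+
  have H2: "\<not> cyc_inclusion (l2, r2) (l1, r1)"
    using H A(1,3) B(1,3) ap1 ap2 by blast
  have c1: "cyc_conj u (l1 @ q1 @ p1)" using A(1) cc_trans cc_app[of p1 "l1 @ q1"] by auto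
  have c2: "cyc_conj u (l2 @ q2 @ p2)" using B(1) cc_trans cc_app[of p2 "l2 @ q2"] by auto
  have "cyc_conj (l1 @ q1 @ p1) (l2 @ q2 @ p2)" using c1 c2 cc_sym cc_trans by blast
  then obtain a b where ab: "l1 @ q1 @ p1 = a @ b" "l2 @ q2 @ p2 = b @ a"
    unfolding cyc_conj_def by blast
  have "join R (r1 @ q1 @ p1) (r2 @ q2 @ p2)"
    by (rule core[OF conf A(3) B(3) H1 H2]) (use ab in auto)
  moreover have "cyc_conj (r1 @ q1 @ p1) v1" using A(2) cc_app[of "r1 @ q1" p1] by simp
  moreover have "cyc_conj (r2 @ q2 @ p2) v2" using B(2) cc_app[of "r2 @ q2" p2] by simp
  ultimately show ?thesis using join_conj join_sym by metis
qed

lemma chain_back: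
  assumes "(cyc_red R)\<^sup>*\<^sup>* x y" "\<exists>g. g 0 = y \<and> (\<forall>n. cyc_red R (g n) (g (Suc n)))"
  shows "\<exists>g. g 0 = x \<and> (\<forall>n. cyc_red R (g n) (g (Suc n)))"
  using assms
proof (induction rule: converse_rtranclp_induct)
  case base
  then show ?case by blast
next
  case (step x x')
  then obtain g where g: "g 0 = x'" "\<forall>n. cyc_red R (g n) (g (Suc n))" by blast
  define g' where "g' = (\<lambda>n. case n of 0 \<Rightarrow> x | Suc m \<Rightarrow> g m)"
  have "\<forall>n. cyc_red R (g' n) (g' (Suc n))"
  proof
    fix n show "cyc_red R (g' n) (g' (Suc n))"
      using g step(1) unfolding g'_def by (cases n) auto
  qed
  moreover have "g' 0 = x" by (simp add: g'_def)
  ultimately show ?case by blast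
qed

lemma wf_rel:
  assumes "allseq_terminates R w"
  shows "wf {(v, u). u \<in> allseq_words R w \<and> cyc_red R u v}"
proof -
  have "\<not> (\<exists>f. \<forall>i. (f (Suc i), f i) \<in> {(v, u). u \<in> allseq_words R w \<and> cyc_red R u v})"
  proof
    assume "\<exists>f. \<forall>i. (f (Suc i), f i) \<in> {(v, u). u \<in> allseq_words R w \<and> cyc_red R u v}"
    then obtain f where f: "\<forall>i. f i \<in> allseq_words R w \<and> cyc_red R (f i) (f (Suc i))" by auto
    then obtain u1 where u1: "cyc_conj w u1" "(cyc_red R)\<^sup>*\<^sup>* u1 (f 0)"
      unfolding allseq_words_def by blast
    have "\<exists>g. g 0 = u1 \<and> (\<forall>n. cyc_red R (g n) (g (Suc n)))"
      by (rule chain_back[OF u1(2)]) (use f in blast)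
    then show False using assms u1(1) unfolding allseq_terminates_def by metis
  qed
  then show ?thesis using wf_iff_no_infinite_down_chain by blast
qed

lemma newman:
  assumes wf: "wf {(v, u). u \<in> W \<and> cyc_red R u v}"
    and closed: "\<And>u v. u \<in> W \<Longrightarrow> cyc_red R u v \<Longrightarrow> v \<in> W"
    and loc: "\<And>u v1 v2. u \<in> W \<Longrightarrow> cyc_red R u v1 \<Longrightarrow> cyc_red R u v2 \<Longrightarrow> join R v1 v2"
  shows "u \<in> W \<Longrightarrow> (cyc_red R)\<^sup>*\<^sup>* u v1 \<Longrightarrow> (cyc_red R)\<^sup>*\<^sup>* u v2 \<Longrightarrow> join R v1 v2"
proof (induction u arbitrary: v1 v2 rule: wf_induct[OF wf])
  case (1 u)
  show ?case
  proof (cases "u = v1")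
    case True
    then show ?thesis using "1.prems"(3) unfolding join_def reach_def using cc_refl by blast
  next
    case n1: False
    then obtain u1 where u1: "cyc_red R u u1" "(cyc_red R)\<^sup>*\<^sup>* u1 v1"
      using "1.prems"(2) by (metis converse_rtranclpE)
    show ?thesis
    proof (cases "u = v2")
      case True
      then show ?thesis using "1.prems"(2) unfolding join_def reach_def using cc_refl by blast
    next
      case n2: False
      then obtain u2 where u2: "cyc_red R u u2" "(cyc_red R)\<^sup>*\<^sup>* u2 v2"
        using "1.prems"(3) by (metis converse_rtranclpE)
      have W1: "u1 \<in> W" and W2: "u2 \<in> W" using closed "1.prems"(1) u1 u2 by auto
      obtain e where e: "reach R u1 e" "reach R u2 e"
        using loc[OF "1.prems"(1) u1(1) u2(1)] unfolding join_def by blast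
      obtain e1 where e1: "(cyc_red R)\<^sup>*\<^sup>* u1 e1" "cyc_conj e1 e"
        using e(1) unfolding reach_def by blast
      have "join R v1 e1" using "1.IH" W1 u1 e1 "1.prems"(1) by blast
      then obtain d1 where d1: "reach R v1 d1" "reach R e1 d1" unfolding join_def by blast
      have "reach R e d1" using reach_trans[OF reach_conj[OF cc_sym[OF e1(2)]] d1(2)] .
      then have "reach R u2 d1" using reach_trans e(2) by blast
      then obtain y where y: "(cyc_red R)\<^sup>*\<^sup>* u2 y" "cyc_conj y d1" unfolding reach_def by blast
      have "join R v2 y" using "1.IH" W2 u2 y "1.prems"(1) by blast
      then obtain d2 where d2: "reach R v2 d2" "reach R y d2" unfolding join_def by blast
      have "reach R d1 d2" using reach_trans[OF reach_conj[OF cc_sym[OF y(2)]] d2(2)] .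
      then have "reach R v1 d2" using reach_trans d1(1) by blast
      then show ?thesis using d2(1) unfolding join_def by blast
    qed
  qed
qed

lemma cyc_irr_iff: "cyc_irreducible R z \<longleftrightarrow> (\<nexists>v. cyc_red R z v)"
  unfolding cyc_irreducible_def irreducible_def cyc_red_def by blast

theorem proposition5p7:
  fixes R :: "'a rule set" and w :: "'a list"
  assumes "complete R"
    and "allseq_terminates R w"
    and "no_cyc_overlap_inclusion R w"
  shows "allseq_converges R w"
proof -
  let ?W = "allseq_words R w"
  have conf: "confluent R" using assms(1) unfolding complete_def by blast
  have wf: "wf {(v, u). u \<in> ?W \<and> cyc_red R u v}" using wf_rel[OF assms(2)] .
  have closed: "\<And>u v. u \<in> ?W \<Longrightarrow> cyc_red R u v \<Longrightarrow> v \<in> ?W"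
    unfolding allseq_words_def by (auto intro: rtranclp.rtrancl_into_rtrancl)
  have loc: "\<And>u v1 v2. u \<in> ?W \<Longrightarrow> cyc_red R u v1 \<Longrightarrow> cyc_red R u v2 \<Longrightarrow> join R v1 v2"
    using local_conf[OF conf] assms(3) unfolding no_cyc_overlap_inclusion_def by blast
  have wW: "w \<in> ?W" unfolding allseq_words_def using cc_refl by blast
  have nf: "u \<in> ?W \<Longrightarrow> \<exists>z. (cyc_red R)\<^sup>*\<^sup>* u z \<and> (\<nexists>v. cyc_red R z v)" for u
  proof (induction u rule: wf_induct[OF wf])
    case (1 u)
    show ?case
    proof (cases "\<exists>v. cyc_red R u v")
      case True
      then obtain v where v: "cyc_red R u v" by blast
      then have "v \<in> ?W" using closed "1.prems" by blast
      then obtain z where "(cyc_red R)\<^sup>*\<^sup>* v z" "\<nexists>v. cyc_red R z v" using "1.IH" v "1.prems" by blast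
      then show ?thesis using v by (meson converse_rtranclp_into_rtranclp)
    qed auto
  qed
  obtain z where z: "(cyc_red R)\<^sup>*\<^sup>* w z" "\<nexists>v. cyc_red R z v" using nf[OF wW] by blast
  have zW: "z \<in> ?W" using z(1) cc_refl unfolding allseq_words_def by blast
  have irr_reach: "\<And>z d. (\<nexists>v. cyc_red R z v) \<Longrightarrow> reach R z d \<Longrightarrow> cyc_conj z d"
    unfolding reach_def by (metis converse_rtranclpE)
  show ?thesis unfolding allseq_converges_def
  proof (intro bexI conjI ballI impI)
    show "cyc_irreducible R z" using z(2) cyc_irr_iff by blast
    show "z \<in> ?W" by (rule zW)
    fix z' assume z'W: "z' \<in> ?W" and irr': "cyc_irreducible R z'"
    obtain u1 where u1: "cyc_conj w u1" "(cyc_red R)\<^sup>*\<^sup>* u1 z'"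
      using z'W unfolding allseq_words_def by blast
    have "reach R w u1" using reach_conj[OF u1(1)] .
    then have "reach R w z'" using reach_trans u1(2) reach_def cc_refl by metis
    then obtain y where y: "(cyc_red R)\<^sup>*\<^sup>* w y" "cyc_conj y z'" unfolding reach_def by blast
    have "join R z y" using newman[OF wf closed loc wW z(1) y(1)] .
    then have "join R z z'" using join_sym join_conj y(2) by metis
    then obtain d where d: "reach R z d" "reach R z' d" unfolding join_def by blast
    have "cyc_conj z d" using irr_reach z(2) d(1) by blast
    moreover have "cyc_conj z' d" using irr_reach irr' cyc_irr_iff d(2) by blast
    ultimately show "cyc_conj z z'" using cc_trans cc_sym by blast
  qed
qed

end
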